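(* For any $y\in\mathbb{R}^n$ and any $\bar y$ with $A\bar y\le b$, $$\big\langle\bar y-y,\ \mathbb{E}_{\mathbb{S}}[a_{i^*}(a_{i^*}^Ty-b_{i^*})^+]\big\rangle=\langle\bar y-y,\nabla f(y)\rangle\le-2f(y)\le-\mu_1d(y,P)^2,$$ where $i^*$ is selected at the point $y$.
   Context: Let $A\in\mathbb{R}^{m\times n}$ have rows $a_1^T,\dots,a_m^T$ with $\|a_i\|_2=1$, and $b\in\mathbb{R}^m$; assume $Ax\le b$ is consistent and let $P=\{x:Ax\le b\}$, $\mathcal{P}(x)$ the Euclidean projection onto $P$, $d(x,P)=\|x-\mathcal{P}(x)\|$, $t^+=\max\{t,0\}$. Fix an integer $1\le\beta\le m$. Sampling distribution $\mathbb{S}$ at $y$: $\tau\subseteq\{1,\dots,m\}$ with $|\tau|=\beta$ uniformly at random, and $i^*\in\tau$ maximizing $(a_i^Ty-b_i)^+$ over $\tau$; $\mathbb{E}_{\mathbb{S}}$ is expectation over $\tau$. $f(y)=\mathbb{E}_{\mathbb{S}}[\frac12|(a_{i^*}^Ty-b_{i^*})^+|^2]$ and $\nabla f(y):=\mathbb{E}_{\mathbb{S}}[(a_{i^*}^Ty-b_{i^*})^+a_{i^*}]$. $L>0$ is a Hoffman constant ($d(x,P)^2\le L^2\|(Ax-b)^+\|^2$ for all $x$); $\mu_1=\frac1{mL^2}$. *)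

theory Defs
  imports "HOL-Analysis.Analysis"
begin

text \<open>A :: real^'n^'m has rows A $ i (i ranges over the finite index type 'm, m = CARD('m)),
  b :: real^'m.  t^+ = max t 0.\<close>

definition pospart :: "real \<Rightarrow> real" where
  "pospart t = max t 0"

definition polyhedron :: "real^'n^'m \<Rightarrow> real^'m \<Rightarrow> (real^'n) set" where
  "polyhedron A b = {x. \<forall>i. (A $ i) \<bullet> x \<le> b $ i}"

definition resid :: "real^'n^'m \<Rightarrow> real^'m \<Rightarrow> real^'n \<Rightarrow> 'm \<Rightarrow> real" where
  "resid A b y i = pospart ((A $ i) \<bullet> y - b $ i)"

text \<open>Sample space of the distribution S: all beta-element subsets tau of {1..m}, uniform.\<close>
definition samples :: "nat \<Rightarrow> 'm::finite set set" where
  "samples \<beta> = {\<tau>. card \<tau> = \<beta>}"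

definition expS :: "nat \<Rightarrow> ('m::finite set \<Rightarrow> 'b::real_vector) \<Rightarrow> 'b" where
  "expS \<beta> g = (1 / real (card (samples \<beta> :: 'm set set))) *\<^sub>R (\<Sum>\<tau>\<in>samples \<beta>. g \<tau>)"

definition valid_selection :: "real^'n^'m \<Rightarrow> real^'m \<Rightarrow> nat \<Rightarrow> real^'n \<Rightarrow> ('m set \<Rightarrow> 'm) \<Rightarrow> bool" where
  "valid_selection A b \<beta> y sel \<longleftrightarrow>
     (\<forall>\<tau>\<in>samples \<beta>. sel \<tau> \<in> \<tau> \<and> (\<forall>i\<in>\<tau>. resid A b y i \<le> resid A b y (sel \<tau>)))"

definition f_obj :: "real^'n^'m \<Rightarrow> real^'m \<Rightarrow> nat \<Rightarrow> ('m set \<Rightarrow> 'm) \<Rightarrow> real^'n \<Rightarrow> real" where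
  "f_obj A b \<beta> sel y = expS \<beta> (\<lambda>\<tau>. (1/2) * (resid A b y (sel \<tau>))\<^sup>2)"

definition grad_f :: "real^'n^'m \<Rightarrow> real^'m \<Rightarrow> nat \<Rightarrow> ('m set \<Rightarrow> 'm) \<Rightarrow> real^'n \<Rightarrow> real^'n" where
  "grad_f A b \<beta> sel y = expS \<beta> (\<lambda>\<tau>. resid A b y (sel \<tau>) *\<^sub>R (A $ sel \<tau>))"

definition hoffman_const :: "real^'n^'m \<Rightarrow> real^'m \<Rightarrow> real \<Rightarrow> bool" where
  "hoffman_const A b L \<longleftrightarrow>
     (\<forall>x. (infdist x (polyhedron A b))\<^sup>2 \<le> L\<^sup>2 * (\<Sum>i\<in>UNIV. (resid A b x i)\<^sup>2))"

end

theory Submission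
  imports Defs
begin

lemma count_samples:
  fixes i :: "'m::finite"
  assumes "1 \<le> \<beta>"
  shows "card {\<tau>\<in>samples \<beta>. i \<in> \<tau>} = (CARD('m) - 1) choose (\<beta> - 1)"
proof -
  have bij: "bij_betw (insert i) {\<sigma>. \<sigma> \<subseteq> - {i} \<and> card \<sigma> = \<beta> - 1} {\<tau>\<in>samples \<beta>. i \<in> \<tau>}"
  proof (rule bij_betw_byWitness[where f' = "\<lambda>\<tau>. \<tau> - {i}"])
    show "\<forall>a\<in>{\<sigma>. \<sigma> \<subseteq> - {i} \<and> card \<sigma> = \<beta> - 1}. insert i a - {i} = a" by auto
    show "\<forall>a'\<in>{\<tau> \<in> samples \<beta>. i \<in> \<tau>}. insert i (a' - {i}) = a'" by auto
    show "insert i ` {\<sigma>. \<sigma> \<subseteq> - {i} \<and> card \<sigma> = \<beta> - 1} \<subseteq> {\<tau> \<in> samples \<beta>. i \<in> \<tau>}"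
    proof
      fix x assume "x \<in> insert i ` {\<sigma>. \<sigma> \<subseteq> - {i} \<and> card \<sigma> = \<beta> - 1}"
      then obtain \<sigma> where x: "x = insert i \<sigma>" and s: "\<sigma> \<subseteq> - {i}" "card \<sigma> = \<beta> - 1" by auto
      have "i \<notin> \<sigma>" using s by auto
      then have "card x = Suc (\<beta> - 1)" using x s by (simp add: card_insert_disjoint)
      then show "x \<in> {\<tau> \<in> samples \<beta>. i \<in> \<tau>}" using assms x by (simp add: samples_def)
    qed
    show "(\<lambda>\<tau>. \<tau> - {i}) ` {\<tau> \<in> samples \<beta>. i \<in> \<tau>} \<subseteq> {\<sigma>. \<sigma> \<subseteq> - {i} \<and> card \<sigma> = \<beta> - 1}"
    proof
      fix x assume "x \<in> (\<lambda>\<tau>. \<tau> - {i}) ` {\<tau> \<in> samples \<beta>. i \<in> \<tau>}"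
      then obtain \<tau> where x: "x = \<tau> - {i}" and t: "card \<tau> = \<beta>" "i \<in> \<tau>" by (auto simp: samples_def)
      have "card x = \<beta> - 1" using x t by (simp add: card_Diff_singleton)
      then show "x \<in> {\<sigma>. \<sigma> \<subseteq> - {i} \<and> card \<sigma> = \<beta> - 1}" using x by auto
    qed
  qed
  have "card {\<tau>\<in>samples \<beta>. i \<in> \<tau>} = card {\<sigma>. \<sigma> \<subseteq> - {i} \<and> card \<sigma> = \<beta> - 1}"
    using bij_betw_same_card[OF bij] by (rule sym)
  also have "\<dots> = card (- {i}) choose (\<beta> - 1)" by (rule n_subsets) simp
  also have "card (- {i}) = CARD('m) - 1"
    by (simp add: Compl_eq_Diff_UNIV card_Diff_singleton)
  finally show ?thesis .
qed

lemma card_samples: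
  shows "card (samples \<beta> :: 'm::finite set set) = CARD('m) choose \<beta>"
proof -
  have "card (samples \<beta> :: 'm set set) = card {B. B \<subseteq> (UNIV::'m set) \<and> card B = \<beta>}"
    by (simp add: samples_def)
  also have "\<dots> = CARD('m) choose \<beta>" by (rule n_subsets) simp
  finally show ?thesis .
qed

theorem lemma8:
  fixes A :: "real^'n^'m" and b :: "real^'m" and \<beta> :: nat and L :: real
    and sel :: "'m set \<Rightarrow> 'm" and y ybar :: "real^'n"
  assumes unit_rows: "\<forall>i. norm (A $ i) = 1"
    and consistent: "polyhedron A b \<noteq> {}"
    and beta: "1 \<le> \<beta>" "\<beta> \<le> CARD('m)"
    and Lpos: "L > 0"
    and hoff: "hoffman_const A b L"
    and sel: "valid_selection A b \<beta> y sel"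
    and ybar: "ybar \<in> polyhedron A b"
  shows "inner (ybar - y) (expS \<beta> (\<lambda>\<tau>. resid A b y (sel \<tau>) *\<^sub>R (A $ sel \<tau>)))
            = inner (ybar - y) (grad_f A b \<beta> sel y)
       \<and> inner (ybar - y) (grad_f A b \<beta> sel y) \<le> - 2 * f_obj A b \<beta> sel y
       \<and> - 2 * f_obj A b \<beta> sel y
            \<le> - (1 / (real CARD('m) * L\<^sup>2)) * (infdist y (polyhedron A b))\<^sup>2"
proof -
  define r where "r i = resid A b y i" for i
  define N where "N = card (samples \<beta> :: 'm set set)"
  define m where "m = CARD('m)"
  have fin: "finite (samples \<beta> :: 'm set set)" by simp
  have rnn: "r i \<ge> 0" for i by (simp add: r_def resid_def pospart_def)
  have Npos: "N > 0" unfolding N_def card_samples using beta by simp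
  have mpos: "m > 0" unfolding m_def by simp
  have fobj: "f_obj A b \<beta> sel y = (1 / real N) * (\<Sum>\<tau>\<in>samples \<beta>. (1/2) * (r (sel \<tau>))\<^sup>2)"
    by (simp add: f_obj_def expS_def N_def r_def)
  have trm: "inner (ybar - y) (r i *\<^sub>R A $ i) \<le> - (r i)\<^sup>2" for i
  proof -
    have yb: "A $ i \<bullet> ybar \<le> b $ i" using ybar by (simp add: polyhedron_def)
    show ?thesis
    proof (cases "A $ i \<bullet> y - b $ i > 0")
      case True
      then have ri: "r i = A $ i \<bullet> y - b $ i" by (simp add: r_def resid_def pospart_def)
      have "inner (ybar - y) (r i *\<^sub>R A $ i) = r i * (A $ i \<bullet> ybar - A $ i \<bullet> y)"
        by (simp add: inner_diff_left inner_commute algebra_simps)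
      also have "\<dots> \<le> r i * (- r i)"
        using yb ri rnn[of i] by (intro mult_left_mono) auto
      finally show ?thesis by (simp add: power2_eq_square)
    next
      case False
      then have "r i = 0" by (simp add: r_def resid_def pospart_def)
      then show ?thesis by simp
    qed
  qed
  have part2: "inner (ybar - y) (grad_f A b \<beta> sel y) \<le> - 2 * f_obj A b \<beta> sel y"
  proof -
    have "inner (ybar - y) (grad_f A b \<beta> sel y)
        = (1 / real N) * (\<Sum>\<tau>\<in>samples \<beta>. inner (ybar - y) (r (sel \<tau>) *\<^sub>R A $ sel \<tau>))"
      by (simp add: grad_f_def expS_def N_def r_def inner_sum_right)
    also have "\<dots> \<le> (1 / real N) * (\<Sum>\<tau>\<in>samples \<beta>. - (r (sel \<tau>))\<^sup>2)"
      by (intro mult_left_mono sum_mono trm) auto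
    also have "\<dots> = - 2 * f_obj A b \<beta> sel y"
      by (simp add: fobj sum_negf sum_distrib_left)
    finally show ?thesis .
  qed
  have maxavg: "real \<beta> * (r (sel \<tau>))\<^sup>2 \<ge> (\<Sum>i\<in>\<tau>. (r i)\<^sup>2)" if "\<tau> \<in> samples \<beta>" for \<tau>
  proof -
    have c: "card \<tau> = \<beta>" using that by (simp add: samples_def)
    have "(\<Sum>i\<in>\<tau>. (r i)\<^sup>2) \<le> (\<Sum>i\<in>\<tau>. (r (sel \<tau>))\<^sup>2)"
    proof (rule sum_mono)
      fix i assume "i \<in> \<tau>"
      then have "r i \<le> r (sel \<tau>)" using sel that by (simp add: valid_selection_def r_def)
      then show "(r i)\<^sup>2 \<le> (r (sel \<tau>))\<^sup>2" using rnn[of i] by (simp add: power_mono)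
    qed
    also have "\<dots> = real \<beta> * (r (sel \<tau>))\<^sup>2" using c by simp
    finally show ?thesis .
  qed
  define c where "c = (m - 1) choose (\<beta> - 1)"
  have cN: "real \<beta> * real N = real m * real c"
  proof -
    have "\<beta> * (m choose \<beta>) = m * ((m - 1) choose (\<beta> - 1))"
      using beta by (intro times_binomial_minus1_eq) simp
    then show ?thesis unfolding N_def card_samples c_def m_def
      by (metis of_nat_mult)
  qed
  have cnt: "card {\<tau>\<in>samples \<beta>. i \<in> \<tau>} = c" for i :: 'm
    using count_samples[OF beta(1), of i] by (simp add: c_def m_def)
  have cval: "real c = real \<beta> * real N / real m"
    using cN mpos by (simp add: field_simps)
  have swap: "(\<Sum>\<tau>\<in>samples \<beta>. \<Sum>i\<in>\<tau>. (r i)\<^sup>2) = real c * (\<Sum>i\<in>UNIV. (r i)\<^sup>2)"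
  proof -
    have "(\<Sum>\<tau>\<in>samples \<beta>. \<Sum>i\<in>\<tau>. (r i)\<^sup>2)
        = (\<Sum>\<tau>\<in>samples \<beta>. \<Sum>i\<in>{i. i \<in> UNIV \<and> i \<in> \<tau>}. (r i)\<^sup>2)" by simp
    also have "\<dots> = (\<Sum>i\<in>UNIV. \<Sum>\<tau>\<in>{\<tau>. \<tau> \<in> samples \<beta> \<and> i \<in> \<tau>}. (r i)\<^sup>2)"
      by (rule sum.swap_restrict) simp_all
    also have "\<dots> = (\<Sum>i\<in>UNIV. real c * (r i)\<^sup>2)"
      using cnt by simp
    finally show ?thesis by (simp add: sum_distrib_left)
  qed
  have H: "(infdist y (polyhedron A b))\<^sup>2 \<le> L\<^sup>2 * (\<Sum>i\<in>UNIV. (r i)\<^sup>2)"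
    using hoff by (simp add: hoffman_const_def r_def)
  have part3: "(1 / (real m * L\<^sup>2)) * (infdist y (polyhedron A b))\<^sup>2 \<le> 2 * f_obj A b \<beta> sel y"
  proof -
    have "(1 / (real m * L\<^sup>2)) * (infdist y (polyhedron A b))\<^sup>2
        \<le> (1 / (real m * L\<^sup>2)) * (L\<^sup>2 * (\<Sum>i\<in>UNIV. (r i)\<^sup>2))"
      using H mpos by (intro mult_left_mono) auto
    also have "\<dots> = (1 / real m) * (\<Sum>i\<in>UNIV. (r i)\<^sup>2)" using Lpos by simp
    also have "\<dots> = (1 / (real \<beta> * real N)) * (\<Sum>\<tau>\<in>samples \<beta>. \<Sum>i\<in>\<tau>. (r i)\<^sup>2)"
      using Npos beta mpos by (simp add: swap cval field_simps)
    also have "\<dots> \<le> (1 / (real \<beta> * real N)) * (\<Sum>\<tau>\<in>samples \<beta>. real \<beta> * (r (sel \<tau>))\<^sup>2)"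
      by (intro mult_left_mono sum_mono maxavg) auto
    also have "\<dots> = 2 * f_obj A b \<beta> sel y"
    proof -
      have e1: "(\<Sum>\<tau>\<in>samples \<beta>. real \<beta> * (r (sel \<tau>))\<^sup>2) = real \<beta> * (\<Sum>\<tau>\<in>samples \<beta>. (r (sel \<tau>))\<^sup>2)"
        by (simp add: sum_distrib_left)
      have e2: "(\<Sum>\<tau>\<in>samples \<beta>. (1/2) * (r (sel \<tau>))\<^sup>2) = (1/2) * (\<Sum>\<tau>\<in>samples \<beta>. (r (sel \<tau>))\<^sup>2)"
        by (simp add: sum_distrib_left)
      show ?thesis unfolding fobj e1 e2 using beta Npos by (simp add: field_simps)
    qed
    finally show ?thesis .
  qed
  show ?thesis
    using part2 part3 by (simp add: grad_f_def m_def)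
qed

end
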